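(* Fix $\hat p:\mathcal{X}\to[0,1]$ and $\delta\ge0$. Let $(X_i,Y_i)$, $i=1,\dots,n$, be i.i.d. with $Y\in\{0,1\}$, $\Pr(Y=1\mid X)=p_0(X)$, and suppose the two-sided null $\Pr(|\hat p(X)-p_0(X)|>\delta)=0$ holds. Use observations $1,\dots,n_1$ as a training partition to fit a finite collection of bounded residual models $\hat g_{\lambda,n}:\mathcal{X}\to\mathbb{R}$, $\lambda\in\Lambda$, and for $\gamma\ge0$ let $\hat h_{\lambda,\gamma,n}(x)=\hat g_{\lambda,n}(x)\mathbb{1}\{|\hat g_{\lambda,n}(x)|\ge\gamma\}$. Define the test statistic $$\hat T^{(split)}_n=\max_{\lambda\in\Lambda,\gamma\ge0}\sum_{i=n_1+1}^n\big(Y_i-\hat p_{\delta\,\mathrm{sign}(\hat h_{\lambda,\gamma,n}(X_i))}(X_i)\big)\hat h_{\lambda,\gamma,n}(X_i).$$ Conditionally on the training partition and on $X_{n_1+1},\dots,X_n$, let $U_i$ be i.i.d. standard uniform random variables and define, for each $\lambda$, $Y^*_{i,\lambda}=\mathbb{1}\{U_i\le\hat p(X_i)+\delta\,\mathrm{sign}(\hat g_{\lambda,n}(X_i))\}$ (the same $U_i$ used for all $\lambda$). Let $T^{*(split)}$ be defined as $\hat T^{(split)}_n$ but with $Y_i$ replaced by $Y^*_{i,\lambda}$ in the term indexed by $\lambda$, and let $\tau_\alpha$ be the conditional $1-\alpha$ quantile of $T^{*(split)}$. Then the test rejecting when $\hat T^{(split)}_n>\tau_\alpha$ has Type I error at most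 $\alpha$ in finite samples.
   Context: For $c\in\mathbb{R}$, $\hat p_{c}(x)=[\hat p(x)+c]_{[0,1]}$, where $[q]_{[0,1]}$ denotes clipping of $q$ to $[0,1]$; $\mathrm{sign}(t)\in\{-1,0,1\}$ is the sign of $t$, with $\mathrm{sign}(0)=0$. The $1-\alpha$ quantile of $T$ is $\inf\{t:\Pr(T\le t)\ge1-\alpha\}$. *)

theory Defs
  imports "HOL-Probability.Probability"
begin

definition clip01 :: "real \<Rightarrow> real" where
  "clip01 q = max 0 (min 1 q)"

definition phat_shift :: "('x \<Rightarrow> real) \<Rightarrow> real \<Rightarrow> 'x \<Rightarrow> real" where
  "phat_shift ph c x = clip01 (ph x + c)"

definition thresh :: "('x \<Rightarrow> real) \<Rightarrow> real \<Rightarrow> 'x \<Rightarrow> real" where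
  "thresh g \<gamma> x = g x * (if \<bar>g x\<bar> \<ge> \<gamma> then 1 else 0)"

text \<open>Split statistic: maximum over lambda in Lambda and gamma >= 0 of the sum over the
  test indices n1+1..n; the responses y may depend on lambda (needed for the bootstrap).\<close>
definition split_stat ::
  "('x \<Rightarrow> real) \<Rightarrow> real \<Rightarrow> 'l set \<Rightarrow> ('l \<Rightarrow> 'x \<Rightarrow> real) \<Rightarrow> nat \<Rightarrow> nat
     \<Rightarrow> (nat \<Rightarrow> 'x) \<Rightarrow> ('l \<Rightarrow> nat \<Rightarrow> real) \<Rightarrow> real" where
  "split_stat ph \<delta> \<Lambda> g n1 n x y =
     Max ((\<lambda>(l, \<gamma>). \<Sum>i\<in>{n1<..n}.
             (y l i - phat_shift ph (\<delta> * sgn (thresh (g l) \<gamma> (x i))) (x i)) * thresh (g l) \<gamma> (x i))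
          ` (\<Lambda> \<times> {0..}))"

definition boot_response ::
  "('x \<Rightarrow> real) \<Rightarrow> real \<Rightarrow> ('l \<Rightarrow> 'x \<Rightarrow> real) \<Rightarrow> (nat \<Rightarrow> 'x) \<Rightarrow> (nat \<Rightarrow> real) \<Rightarrow> 'l \<Rightarrow> nat \<Rightarrow> real" where
  "boot_response ph \<delta> g x u l i = (if u i \<le> ph (x i) + \<delta> * sgn (g l (x i)) then 1 else 0)"

definition boot_law :: "nat \<Rightarrow> nat \<Rightarrow> (nat \<Rightarrow> real) measure" where
  "boot_law n1 n = PiM {n1<..n} (\<lambda>_. uniform_measure lborel {0..1})"

definition quantile_upper :: "'u measure \<Rightarrow> ('u \<Rightarrow> real) \<Rightarrow> real \<Rightarrow> real" where
  "quantile_upper \<mu> T \<alpha> = Inf {t. measure \<mu> {u \<in> space \<mu>. T u \<le> t} \<ge> 1 - \<alpha>}"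

definition training_data ::
  "nat \<Rightarrow> (nat \<Rightarrow> 'a \<Rightarrow> 'x) \<Rightarrow> (nat \<Rightarrow> 'a \<Rightarrow> real) \<Rightarrow> 'a \<Rightarrow> nat \<Rightarrow> 'x \<times> real" where
  "training_data n1 X Y \<omega> = (\<lambda>i\<in>{1..n1}. (X i \<omega>, Y i \<omega>))"

end

theory Submission
  imports Defs
begin


definition sterm :: "('x\<Rightarrow>real) \<Rightarrow> real \<Rightarrow> ('l \<Rightarrow> 'x \<Rightarrow> real) \<Rightarrow> nat \<Rightarrow> nat \<Rightarrow> (nat \<Rightarrow> 'x) \<Rightarrow> ('l \<Rightarrow> nat \<Rightarrow> real) \<Rightarrow> 'l \<Rightarrow> real \<Rightarrow> real" where
 "sterm ph \<delta> g n1 n x y l \<gamma> = (\<Sum>i\<in>{n1<..n}. (y l i - phat_shift ph (\<delta> * sgn (thresh (g l) \<gamma> (x i))) (x i)) * thresh (g l) \<gamma> (x i))"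

definition cand :: "('l \<Rightarrow> 'x \<Rightarrow> real) \<Rightarrow> nat \<Rightarrow> nat \<Rightarrow> (nat \<Rightarrow> 'x) \<Rightarrow> 'l \<Rightarrow> nat \<Rightarrow> real" where
 "cand g n1 n x l j = (if j \<in> {n1<..n} then \<bar>g l (x j)\<bar> else (\<Sum>i\<in>{n1<..n}. \<bar>g l (x i)\<bar>) + 1)"

lemma sterm_cong:
  assumes "\<forall>i\<in>{n1<..n}. (\<gamma> \<le> \<bar>g l (x i)\<bar>) = (\<gamma>' \<le> \<bar>g l (x i)\<bar>)"
  shows "sterm ph \<delta> g n1 n x y l \<gamma> = sterm ph \<delta> g n1 n x y l \<gamma>'"
proof -
  have "\<And>i. i\<in>{n1<..n} \<Longrightarrow> thresh (g l) \<gamma> (x i) = thresh (g l) \<gamma>' (x i)"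
    using assms by (auto simp: thresh_def)
  then show ?thesis unfolding sterm_def by (intro sum.cong) auto
qed

lemma cand_nonneg: "cand g n1 n x l j \<ge> 0"
  unfolding cand_def by (auto intro: sum_nonneg add_nonneg_nonneg)

lemma image_eq:
  "(\<lambda>(l, \<gamma>). sterm ph \<delta> g n1 n x y l \<gamma>) ` (\<Lambda> \<times> {0..})
   = (\<lambda>(l,j). sterm ph \<delta> g n1 n x y l (cand g n1 n x l j)) ` (\<Lambda> \<times> insert 0 {n1<..n})"
proof
  show "(\<lambda>(l,j). sterm ph \<delta> g n1 n x y l (cand g n1 n x l j)) ` (\<Lambda> \<times> insert 0 {n1<..n})
      \<subseteq> (\<lambda>(l, \<gamma>). sterm ph \<delta> g n1 n x y l \<gamma>) ` (\<Lambda> \<times> {0..})"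
  proof
    fix p assume "p \<in> (\<lambda>(l,j). sterm ph \<delta> g n1 n x y l (cand g n1 n x l j)) ` (\<Lambda> \<times> insert 0 {n1<..n})"
    then obtain l j where "l \<in> \<Lambda>" "p = sterm ph \<delta> g n1 n x y l (cand g n1 n x l j)" by auto
    then show "p \<in> (\<lambda>(l, \<gamma>). sterm ph \<delta> g n1 n x y l \<gamma>) ` (\<Lambda> \<times> {0..})"
      by (intro image_eqI[where x="(l, cand g n1 n x l j)"]) (auto simp: cand_nonneg)
  qed
next
  show "(\<lambda>(l, \<gamma>). sterm ph \<delta> g n1 n x y l \<gamma>) ` (\<Lambda> \<times> {0..})
      \<subseteq> (\<lambda>(l,j). sterm ph \<delta> g n1 n x y l (cand g n1 n x l j)) ` (\<Lambda> \<times> insert 0 {n1<..n})"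
  proof
    fix p assume "p \<in> (\<lambda>(l, \<gamma>). sterm ph \<delta> g n1 n x y l \<gamma>) ` (\<Lambda> \<times> {0..})"
    then obtain l \<gamma> where l: "l \<in> \<Lambda>" and g0: "\<gamma> \<ge> 0" and p: "p = sterm ph \<delta> g n1 n x y l \<gamma>" by auto
    define S where "S = {i\<in>{n1<..n}. \<gamma> \<le> \<bar>g l (x i)\<bar>}"
    have finS: "finite S" unfolding S_def by auto
    show "p \<in> (\<lambda>(l,j). sterm ph \<delta> g n1 n x y l (cand g n1 n x l j)) ` (\<Lambda> \<times> insert 0 {n1<..n})"
    proof (cases "S = {}")
      case True
      have "\<forall>i\<in>{n1<..n}. (\<gamma> \<le> \<bar>g l (x i)\<bar>) = (cand g n1 n x l 0 \<le> \<bar>g l (x i)\<bar>)"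
      proof
        fix i assume i: "i \<in> {n1<..n}"
        have "\<bar>g l (x i)\<bar> \<le> (\<Sum>i\<in>{n1<..n}. \<bar>g l (x i)\<bar>)"
          using i by (intro member_le_sum) auto
        moreover have "cand g n1 n x l 0 = (\<Sum>i\<in>{n1<..n}. \<bar>g l (x i)\<bar>) + 1"
          unfolding cand_def by simp
        moreover have "i \<notin> S" using True by simp
        ultimately show "(\<gamma> \<le> \<bar>g l (x i)\<bar>) = (cand g n1 n x l 0 \<le> \<bar>g l (x i)\<bar>)"
          using i unfolding S_def by auto
      qed
      then have "sterm ph \<delta> g n1 n x y l \<gamma> = sterm ph \<delta> g n1 n x y l (cand g n1 n x l 0)"
        by (rule sterm_cong)
      then show ?thesis using l p by (intro image_eqI[where x="(l, 0)"]) auto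
    next
      case False
      define m where "m = Min ((\<lambda>i. \<bar>g l (x i)\<bar>) ` S)"
      have "m \<in> (\<lambda>i. \<bar>g l (x i)\<bar>) ` S" unfolding m_def using finS False by (intro Min_in) auto
      then obtain j where j: "j \<in> S" and mj: "m = \<bar>g l (x j)\<bar>" by auto
      have jmin: "\<forall>i\<in>S. \<bar>g l (x j)\<bar> \<le> \<bar>g l (x i)\<bar>"
        using finS unfolding mj[symmetric] m_def by auto
      have jte: "j \<in> {n1<..n}" using j S_def by auto
      have "\<forall>i\<in>{n1<..n}. (\<gamma> \<le> \<bar>g l (x i)\<bar>) = (cand g n1 n x l j \<le> \<bar>g l (x i)\<bar>)"
      proof
        fix i assume i: "i \<in> {n1<..n}"
        have c: "cand g n1 n x l j = \<bar>g l (x j)\<bar>" using jte unfolding cand_def by simp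
        have "\<gamma> \<le> \<bar>g l (x j)\<bar>" using j unfolding S_def by simp
        then show "(\<gamma> \<le> \<bar>g l (x i)\<bar>) = (cand g n1 n x l j \<le> \<bar>g l (x i)\<bar>)"
          unfolding c using jmin i unfolding S_def by force
      qed
      then have "sterm ph \<delta> g n1 n x y l \<gamma> = sterm ph \<delta> g n1 n x y l (cand g n1 n x l j)"
        by (rule sterm_cong)
      then show ?thesis using l p jte by (intro image_eqI[where x="(l, j)"]) auto
    qed
  qed
qed

lemma split_stat_alt:
  "split_stat ph \<delta> \<Lambda> g n1 n x y = Max ((\<lambda>(l,j). sterm ph \<delta> g n1 n x y l (cand g n1 n x l j)) ` (\<Lambda> \<times> insert 0 {n1<..n}))"
proof -
  have "split_stat ph \<delta> \<Lambda> g n1 n x y = Max ((\<lambda>(l, \<gamma>). sterm ph \<delta> g n1 n x y l \<gamma>) ` (\<Lambda> \<times> {0..}))"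
    by (simp add: split_stat_def sterm_def)
  then show ?thesis using image_eq by metis
qed



lemma quantile_lt:
  fixes W :: "'a \<Rightarrow> real"
  assumes P: "prob_space \<mu>" and bd: "\<forall>u\<in>space \<mu>. W u \<le> K"
    and meas: "{u\<in>space \<mu>. W u < t} \<in> sets \<mu>"
    and q: "quantile_upper \<mu> W \<alpha> < t" and a: "0 < \<alpha>"
  shows "1 - \<alpha> \<le> measure \<mu> {u\<in>space \<mu>. W u < t}"
proof -
  interpret prob_space \<mu> by fact
  define S where "S = {t. measure \<mu> {u \<in> space \<mu>. W u \<le> t} \<ge> 1 - \<alpha>}"
  have "{u \<in> space \<mu>. W u \<le> K} = space \<mu>" using bd by auto
  then have "K \<in> S" unfolding S_def using a by (simp add: prob_space)
  then have "S \<noteq> {}" by auto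
  moreover have "Inf S < t" using q unfolding quantile_upper_def S_def by simp
  ultimately obtain s where s: "s \<in> S" "s < t" using cInf_lessD by blast
  have "measure \<mu> {u \<in> space \<mu>. W u \<le> s} \<le> measure \<mu> {u\<in>space \<mu>. W u < t}"
    using s(2) meas by (intro finite_measure_mono) auto
  then show ?thesis using s(1) unfolding S_def by simp
qed

lemma tail_bound:
  fixes W :: "'a \<Rightarrow> real"
  assumes P: "prob_space \<mu>" and Wm: "W \<in> borel_measurable \<mu>" and bd: "\<forall>u\<in>space \<mu>. \<bar>W u\<bar> \<le> K"
    and a: "0 < \<alpha>" "\<alpha> < 1"
  shows "measure \<mu> {v\<in>space \<mu>. 1 - \<alpha> \<le> measure \<mu> {u\<in>space \<mu>. W u < W v}} \<le> \<alpha>"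
proof -
  interpret prob_space \<mu> by fact
  define G where "G t = measure \<mu> {u\<in>space \<mu>. W u < t}" for t
  have Gmeas: "{u\<in>space \<mu>. W u < t} \<in> sets \<mu>" for t using Wm by measurable
  have Gmono: "G t \<le> G t'" if "t \<le> t'" for t t'
    unfolding G_def using that Gmeas by (intro finite_measure_mono) auto
  define Ks where "Ks = {t. 1 - \<alpha> \<le> G t}"
  define E where "E = {v\<in>space \<mu>. 1 - \<alpha> \<le> measure \<mu> {u\<in>space \<mu>. W u < W v}}"
  show ?thesis
  proof (cases "E = {}")
    case True then have "measure \<mu> E = 0" by simp
    then show ?thesis using a unfolding E_def by simp
  next
    case False
    then obtain v0 where "v0 \<in> E" by auto
    then have "W v0 \<in> Ks" unfolding E_def Ks_def G_def by auto
    then have Kne: "Ks \<noteq> {}" by auto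
    have lowK: "-K \<le> t" if "t \<in> Ks" for t
    proof (rule ccontr)
      assume "\<not> - K \<le> t"
      then have "{u\<in>space \<mu>. W u < t} = {}" using bd by force
      then have "G t = 0" unfolding G_def by (metis measure_empty)
      with that a show False unfolding Ks_def by simp
    qed
    have bdd: "bdd_below Ks" using lowK unfolding bdd_below_def by blast
    define s where "s = Inf Ks"
    have sle: "s \<le> t" if "t \<in> Ks" for t unfolding s_def using bdd that by (simp add: cInf_lower)
    have EK: "E \<subseteq> {v\<in>space \<mu>. W v \<in> Ks}" unfolding E_def Ks_def G_def by auto
    show ?thesis
    proof (cases "s \<in> Ks")
      case True
      have "E \<subseteq> space \<mu> - {u\<in>space \<mu>. W u < s}" using EK sle by force
      then have "measure \<mu> E \<le> measure \<mu> (space \<mu> - {u\<in>space \<mu>. W u < s})"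
        using Gmeas by (intro finite_measure_mono) auto
      also have "\<dots> = 1 - G s" unfolding G_def using Gmeas by (simp add: prob_compl)
      also have "\<dots> \<le> \<alpha>" using True unfolding Ks_def by simp
      finally show ?thesis unfolding E_def .
    next
      case False
      define A where "A k = {u\<in>space \<mu>. W u < s + 1 / Suc k}" for k :: nat
      have Ameas: "range A \<subseteq> sets \<mu>" unfolding A_def using Gmeas by auto
      have Adec: "decseq A"
        unfolding A_def decseq_def
      proof (intro allI impI subsetI)
        fix m k :: nat and u assume mk: "m \<le> k" and u: "u \<in> {u \<in> space \<mu>. W u < s + 1 / real (Suc k)}"
        have "1 / real (Suc k) \<le> 1 / real (Suc m)" using mk by (simp add: frac_le)
        then show "u \<in> {u \<in> space \<mu>. W u < s + 1 / real (Suc m)}" using u by auto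
      qed
      have Aint: "(\<Inter>k. A k) = {u\<in>space \<mu>. W u \<le> s}"
      proof
        show "{u\<in>space \<mu>. W u \<le> s} \<subseteq> (\<Inter>k. A k)" unfolding A_def
          by (auto intro: order.strict_trans1[OF _ less_add_same_cancel1[THEN iffD2]])
        show "(\<Inter>k. A k) \<subseteq> {u\<in>space \<mu>. W u \<le> s}"
        proof
          fix u assume u: "u \<in> (\<Inter>k. A k)"
          then have us: "u \<in> space \<mu>" unfolding A_def by auto
          have "W u \<le> s"
          proof (rule ccontr)
            assume "\<not> W u \<le> s"
            then have "0 < W u - s" by simp
            then obtain k where "1 / real (Suc k) < W u - s"
              using reals_Archimedean by (metis inverse_eq_divide)
            moreover have "u \<in> A k" using u by auto
            ultimately show False unfolding A_def by auto
          qed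
          then show "u \<in> {u\<in>space \<mu>. W u \<le> s}" using us by simp
        qed
      qed
      have lim: "(\<lambda>k. measure \<mu> (A k)) \<longlonglongrightarrow> measure \<mu> {u\<in>space \<mu>. W u \<le> s}"
        using finite_Lim_measure_decseq[OF Ameas Adec] unfolding Aint .
      have "1 - \<alpha> \<le> measure \<mu> (A k)" for k
      proof -
        have "s < s + 1 / Suc k" by simp
        then obtain t where t: "t \<in> Ks" "t < s + 1 / Suc k"
          using cInf_lessD[OF Kne] unfolding s_def by blast
        then have "G t \<le> G (s + 1 / Suc k)" by (intro Gmono) simp
        then show ?thesis using t(1) unfolding Ks_def A_def G_def by simp
      qed
      then have low: "1 - \<alpha> \<le> measure \<mu> {u\<in>space \<mu>. W u \<le> s}"
        by (intro LIMSEQ_le_const[OF lim]) auto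
      have "E \<subseteq> space \<mu> - {u\<in>space \<mu>. W u \<le> s}" using EK sle False by force
      then have "measure \<mu> E \<le> measure \<mu> (space \<mu> - {u\<in>space \<mu>. W u \<le> s})"
        using Wm by (intro finite_measure_mono) auto
      also have "\<dots> = 1 - measure \<mu> {u\<in>space \<mu>. W u \<le> s}"
        using Wm by (subst prob_compl) auto
      also have "\<dots> \<le> \<alpha>" using low by simp
      finally show ?thesis unfolding E_def .
    qed
  qed
qed



lemma max_mono_img:
  fixes f f' :: "'k \<Rightarrow> real"
  assumes "finite K" "K \<noteq> {}" "\<And>k. k \<in> K \<Longrightarrow> f k \<le> f' k"
  shows "Max (f ` K) \<le> Max (f' ` K)"
proof -
  have "Max (f ` K) \<in> f ` K" using assms by (intro Max_in) auto
  then obtain k where k: "k \<in> K" "Max (f ` K) = f k" by auto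
  have "f' k \<le> Max (f' ` K)" using assms k by (intro Max_ge) auto
  then show ?thesis using k assms(3)[of k] by simp
qed

lemma coupling_term:
  fixes h c v q p \<delta> :: real
  assumes "\<bar>p - q\<bar> \<le> \<delta>" "h = 0 \<or> h = a"
  shows "((if v \<le> q then 1 else 0) - c) * h \<le> ((if v \<le> p + \<delta> * sgn a then 1 else 0) - c) * h"
proof (cases "h = 0")
  case True then show ?thesis by simp
next
  case False
  then have ha: "h = a" using assms by auto
  show ?thesis
  proof (cases "h > 0")
    case True
    then have "sgn a = 1" using ha by simp
    then have "(if v \<le> q then 1 else 0) \<le> (if v \<le> p + \<delta> * sgn a then 1 else (0::real))"
      using assms(1) by auto
    then show ?thesis using True by (intro mult_right_mono) auto
  next
    case False
    then have hn: "h < 0" using \<open>h \<noteq> 0\<close> by simp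
    then have "sgn a = -1" using ha by simp
    then have "(if v \<le> p + \<delta> * sgn a then 1 else (0::real)) \<le> (if v \<le> q then 1 else 0)"
      using assms(1) by auto
    then show ?thesis using hn by (intro mult_right_mono_neg) auto
  qed
qed

lemma coupling:
  fixes gg :: "'l \<Rightarrow> 'x \<Rightarrow> real"
  assumes fin: "finite \<Lambda>" "\<Lambda> \<noteq> {}"
    and close: "\<forall>i\<in>{n1<..n}. \<bar>phat (x i) - q (x i)\<bar> \<le> \<delta>"
  shows "split_stat phat \<delta> \<Lambda> gg n1 n x (\<lambda>l i. if v i \<le> q (x i) then 1 else 0)
      \<le> split_stat phat \<delta> \<Lambda> gg n1 n x (boot_response phat \<delta> gg x v)"
  unfolding split_stat_alt
proof (rule max_mono_img)
  show "finite (\<Lambda> \<times> insert 0 {n1<..n})" using fin by simp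
  show "\<Lambda> \<times> insert 0 {n1<..n} \<noteq> {}" using fin by simp
  fix k assume "k \<in> \<Lambda> \<times> insert 0 {n1<..n}"
  obtain l j where k: "k = (l, j)" by (cases k)
  show "(\<lambda>(l, j). sterm phat \<delta> gg n1 n x (\<lambda>l i. if v i \<le> q (x i) then 1 else 0) l (cand gg n1 n x l j)) k
        \<le> (\<lambda>(l, j). sterm phat \<delta> gg n1 n x (boot_response phat \<delta> gg x v) l (cand gg n1 n x l j)) k"
    unfolding k split sterm_def boot_response_def
  proof (rule sum_mono)
    fix i assume i: "i \<in> {n1<..n}"
    show "((if v i \<le> q (x i) then 1 else 0) - phat_shift phat (\<delta> * sgn (thresh (gg l) (cand gg n1 n x l j) (x i))) (x i)) *
          thresh (gg l) (cand gg n1 n x l j) (x i)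
       \<le> ((if v i \<le> phat (x i) + \<delta> * sgn (gg l (x i)) then 1 else 0) -
           phat_shift phat (\<delta> * sgn (thresh (gg l) (cand gg n1 n x l j) (x i))) (x i)) *
          thresh (gg l) (cand gg n1 n x l j) (x i)"
      by (rule coupling_term) (use close i in \<open>auto simp: thresh_def\<close>)
  qed
qed



lemma split_stat_cong:
  assumes "\<forall>l\<in>\<Lambda>. \<forall>i\<in>{n1<..n}. gg l (x i) = gg' l (x' i)"
    and "\<forall>i\<in>{n1<..n}. ph (x i) = ph (x' i)"
    and "\<forall>l\<in>\<Lambda>. \<forall>i\<in>{n1<..n}. y l i = y' l i"
  shows "split_stat ph \<delta> \<Lambda> gg n1 n x y = split_stat ph \<delta> \<Lambda> gg' n1 n x' y'"
  unfolding split_stat_alt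
proof (rule arg_cong[where f=Max], rule image_cong[OF refl])
  fix k assume "k \<in> \<Lambda> \<times> insert 0 {n1<..n}"
  then obtain l j where k: "k = (l, j)" "l \<in> \<Lambda>" by auto
  have c: "cand gg n1 n x l j = cand gg' n1 n x' l j"
    unfolding cand_def using assms(1) k by (auto intro!: sum.cong)
  show "(\<lambda>(l, j). sterm ph \<delta> gg n1 n x y l (cand gg n1 n x l j)) k =
        (\<lambda>(l, j). sterm ph \<delta> gg' n1 n x' y' l (cand gg' n1 n x' l j)) k"
    unfolding k split c sterm_def thresh_def phat_shift_def
    using assms k by (intro sum.cong) auto
qed

lemma split_stat_bound:
  assumes fin: "finite \<Lambda>" "\<Lambda> \<noteq> {}"
    and y01: "\<forall>l\<in>\<Lambda>. \<forall>i\<in>{n1<..n}. y l i \<in> {0,1}"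
  shows "\<bar>split_stat ph \<delta> \<Lambda> gg n1 n x y\<bar> \<le> (\<Sum>l\<in>\<Lambda>. \<Sum>i\<in>{n1<..n}. \<bar>gg l (x i)\<bar>)"
proof -
  let ?f = "\<lambda>(l, j). sterm ph \<delta> gg n1 n x y l (cand gg n1 n x l j)"
  let ?K = "\<Lambda> \<times> insert 0 {n1<..n}"
  have "Max (?f ` ?K) \<in> ?f ` ?K" using fin by (intro Max_in) auto
  then obtain l j where lj: "l \<in> \<Lambda>" "Max (?f ` ?K) = sterm ph \<delta> gg n1 n x y l (cand gg n1 n x l j)" by auto
  have "\<bar>sterm ph \<delta> gg n1 n x y l (cand gg n1 n x l j)\<bar> \<le> (\<Sum>i\<in>{n1<..n}. \<bar>gg l (x i)\<bar>)"
    unfolding sterm_def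
  proof (rule order.trans[OF sum_abs], rule sum_mono)
    fix i assume i: "i \<in> {n1<..n}"
    define h where "h = thresh (gg l) (cand gg n1 n x l j) (x i)"
    define c where "c = phat_shift ph (\<delta> * sgn h) (x i)"
    have c01: "0 \<le> c" "c \<le> 1" unfolding c_def phat_shift_def clip01_def by auto
    have "y l i = 0 \<or> y l i = 1" using y01 lj(1) i by auto
    then have "\<bar>y l i - c\<bar> \<le> 1" using c01 by auto
    moreover have "\<bar>h\<bar> \<le> \<bar>gg l (x i)\<bar>" unfolding h_def thresh_def by auto
    ultimately have "\<bar>y l i - c\<bar> * \<bar>h\<bar> \<le> 1 * \<bar>gg l (x i)\<bar>"
      by (intro mult_mono) auto
    then show "\<bar>(y l i - phat_shift ph (\<delta> * sgn (thresh (gg l) (cand gg n1 n x l j) (x i))) (x i)) *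
          thresh (gg l) (cand gg n1 n x l j) (x i)\<bar> \<le> \<bar>gg l (x i)\<bar>"
      unfolding h_def[symmetric] c_def[symmetric] by (simp add: abs_mult)
  qed
  also have "\<dots> \<le> (\<Sum>l\<in>\<Lambda>. \<Sum>i\<in>{n1<..n}. \<bar>gg l (x i)\<bar>)"
    using fin lj(1) by (intro member_le_sum) (auto intro: sum_nonneg)
  finally show ?thesis unfolding split_stat_alt lj(2) .
qed

lemma split_stat_meas:
  fixes xx :: "'w \<Rightarrow> nat \<Rightarrow> 'x" and gg :: "'w \<Rightarrow> 'l \<Rightarrow> 'x \<Rightarrow> real" and yy :: "'w \<Rightarrow> 'l \<Rightarrow> nat \<Rightarrow> real"
  assumes fin: "finite \<Lambda>" and ph: "phat \<in> borel_measurable MX"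
    and xm: "\<And>i. i \<in> {n1<..n} \<Longrightarrow> (\<lambda>\<omega>. xx \<omega> i) \<in> measurable N MX"
    and gm: "\<And>l i. l \<in> \<Lambda> \<Longrightarrow> i \<in> {n1<..n} \<Longrightarrow> (\<lambda>\<omega>. gg \<omega> l (xx \<omega> i)) \<in> borel_measurable N"
    and ym: "\<And>l i. l \<in> \<Lambda> \<Longrightarrow> i \<in> {n1<..n} \<Longrightarrow> (\<lambda>\<omega>. yy \<omega> l i) \<in> borel_measurable N"
  shows "(\<lambda>\<omega>. split_stat phat \<delta> \<Lambda> (gg \<omega>) n1 n (xx \<omega>) (yy \<omega>)) \<in> borel_measurable N"
  unfolding split_stat_alt
proof (rule borel_measurable_Max)
  show "finite (\<Lambda> \<times> insert 0 {n1<..n})" using fin by simp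
  fix k assume "k \<in> \<Lambda> \<times> insert 0 {n1<..n}"
  then obtain l j where k: "k = (l, j)" "l \<in> \<Lambda>" "j \<in> insert 0 {n1<..n}" by auto
  have phx: "(\<lambda>\<omega>. phat (xx \<omega> i)) \<in> borel_measurable N" if "i \<in> {n1<..n}" for i
    using measurable_comp[OF xm[OF that] ph] by (simp add: o_def)
  have cm: "(\<lambda>\<omega>. cand (gg \<omega>) n1 n (xx \<omega>) l j) \<in> borel_measurable N"
  proof (cases "j \<in> {n1<..n}")
    case True then show ?thesis unfolding cand_def using gm[OF k(2) True] by simp
  next
    case False
    have "(\<lambda>\<omega>. (\<Sum>i\<in>{n1<..n}. \<bar>gg \<omega> l (xx \<omega> i)\<bar>) + 1) \<in> borel_measurable N"
      using gm[OF k(2)] by (intro borel_measurable_add borel_measurable_sum borel_measurable_abs) auto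
    moreover have "(\<lambda>\<omega>. cand (gg \<omega>) n1 n (xx \<omega>) l j) = (\<lambda>\<omega>. (\<Sum>i\<in>{n1<..n}. \<bar>gg \<omega> l (xx \<omega> i)\<bar>) + 1)"
      unfolding cand_def using False by (intro ext) (simp only: if_False)
    ultimately show ?thesis by simp
  qed
  show "(\<lambda>\<omega>. (\<lambda>(l, j). sterm phat \<delta> (gg \<omega>) n1 n (xx \<omega>) (yy \<omega>) l (cand (gg \<omega>) n1 n (xx \<omega>) l j)) k) \<in> borel_measurable N"
    unfolding k split sterm_def
  proof (rule borel_measurable_sum)
    fix i assume i: "i \<in> {n1<..n}"
    note [measurable] = gm[OF k(2) i] ym[OF k(2) i] phx[OF i] cm
    show "(\<lambda>\<omega>. (yy \<omega> l i - phat_shift phat (\<delta> * sgn (thresh (gg \<omega> l) (cand (gg \<omega>) n1 n (xx \<omega>) l j) (xx \<omega> i))) (xx \<omega> i)) *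
              thresh (gg \<omega> l) (cand (gg \<omega>) n1 n (xx \<omega>) l j) (xx \<omega> i)) \<in> borel_measurable N"
      unfolding thresh_def phat_shift_def clip01_def by measurable
  qed
qed



lemma distr_zip_PiM:
  assumes fin: "finite I" and PA: "prob_space A" and PB: "prob_space B"
  shows "distr (PiM I (\<lambda>_. A) \<Otimes>\<^sub>M PiM I (\<lambda>_. B)) (PiM I (\<lambda>_. A \<Otimes>\<^sub>M B)) (\<lambda>(f,g). \<lambda>i\<in>I. (f i, g i))
         = PiM I (\<lambda>_. A \<Otimes>\<^sub>M B)"
proof -
  interpret A: prob_space A by fact
  interpret B: prob_space B by fact
  interpret AB: prob_space "A \<Otimes>\<^sub>M B" by (intro prob_space_pair PA PB)
  interpret PA: product_prob_space "\<lambda>_. A" I by standard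
  interpret PB: product_prob_space "\<lambda>_. B" I by standard
  interpret PAB: product_prob_space "\<lambda>_. A \<Otimes>\<^sub>M B" I by standard
  have sfB: "sigma_finite_measure (PiM I (\<lambda>_. B))"
    by (intro prob_space_imp_sigma_finite prob_space_PiM PB)
  let ?z = "\<lambda>(f,g). \<lambda>i\<in>I. (f i, g i)"
  have zm: "?z \<in> measurable (PiM I (\<lambda>_. A) \<Otimes>\<^sub>M PiM I (\<lambda>_. B)) (PiM I (\<lambda>_. A \<Otimes>\<^sub>M B))"
    by measurable
  show ?thesis
  proof (rule PAB.PiM_eqI[OF fin])
    show "sets (distr (PiM I (\<lambda>_. A) \<Otimes>\<^sub>M PiM I (\<lambda>_. B)) (PiM I (\<lambda>_. A \<Otimes>\<^sub>M B)) ?z) = sets (PiM I (\<lambda>_. A \<Otimes>\<^sub>M B))"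
      by simp
    fix C assume C: "\<And>i. i \<in> I \<Longrightarrow> C i \<in> sets (A \<Otimes>\<^sub>M B)"
    have CE: "Pi\<^sub>E I C \<in> sets (PiM I (\<lambda>_. A \<Otimes>\<^sub>M B))" using C by (intro sets_PiM_I_finite fin) auto
    let ?Q = "?z -` Pi\<^sub>E I C \<inter> space (PiM I (\<lambda>_. A) \<Otimes>\<^sub>M PiM I (\<lambda>_. B))"
    have Qm: "?Q \<in> sets (PiM I (\<lambda>_. A) \<Otimes>\<^sub>M PiM I (\<lambda>_. B))"
      using measurable_sets[OF zm CE] .
    have "emeasure (distr (PiM I (\<lambda>_. A) \<Otimes>\<^sub>M PiM I (\<lambda>_. B)) (PiM I (\<lambda>_. A \<Otimes>\<^sub>M B)) ?z) (Pi\<^sub>E I C)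
        = emeasure (PiM I (\<lambda>_. A) \<Otimes>\<^sub>M PiM I (\<lambda>_. B)) ?Q"
      using zm CE by (rule emeasure_distr)
    also have "\<dots> = (\<integral>\<^sup>+f. emeasure (PiM I (\<lambda>_. B)) (Pair f -` ?Q) \<partial>PiM I (\<lambda>_. A))"
      using Qm by (rule sigma_finite_measure.emeasure_pair_measure_alt[OF sfB])
    also have "\<dots> = (\<integral>\<^sup>+f. (\<Prod>i\<in>I. emeasure B (Pair (f i) -` C i)) \<partial>PiM I (\<lambda>_. A))"
    proof (rule nn_integral_cong)
      fix f assume f: "f \<in> space (PiM I (\<lambda>_. A))"
      have "Pair f -` ?Q = Pi\<^sub>E I (\<lambda>i. Pair (f i) -` C i)"
      proof (intro set_eqI iffI)
        fix g assume "g \<in> Pair f -` ?Q"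
        then have "g \<in> space (PiM I (\<lambda>_. B))" "(\<lambda>i\<in>I. (f i, g i)) \<in> Pi\<^sub>E I C"
          using f by (auto simp: space_pair_measure)
        then show "g \<in> Pi\<^sub>E I (\<lambda>i. Pair (f i) -` C i)"
          unfolding space_PiM by (auto simp: PiE_iff)
      next
        fix g assume g: "g \<in> Pi\<^sub>E I (\<lambda>i. Pair (f i) -` C i)"
        have "g i \<in> space B" if "i \<in> I" for i
          using g that sets.sets_into_space[OF C[OF that]] by (auto simp: space_pair_measure PiE_iff)
        then show "g \<in> Pair f -` ?Q"
          using g f by (auto simp: space_pair_measure space_PiM PiE_iff)
      qed
      then show "emeasure (PiM I (\<lambda>_. B)) (Pair f -` ?Q) = (\<Prod>i\<in>I. emeasure B (Pair (f i) -` C i))"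
        using C by (simp add: PB.emeasure_PiM[OF fin] sets_Pair1)
    qed
    also have "\<dots> = (\<Prod>i\<in>I. \<integral>\<^sup>+x. emeasure B (Pair x -` C i) \<partial>A)"
      using C by (intro PA.product_nn_integral_prod fin B.measurable_emeasure_Pair) auto
    also have "\<dots> = (\<Prod>i\<in>I. emeasure (A \<Otimes>\<^sub>M B) (C i))"
      using C by (intro prod.cong refl B.emeasure_pair_measure_alt[symmetric]) auto
    finally show "emeasure (distr (PiM I (\<lambda>_. A) \<Otimes>\<^sub>M PiM I (\<lambda>_. B)) (PiM I (\<lambda>_. A \<Otimes>\<^sub>M B)) ?z) (Pi\<^sub>E I C)
        = (\<Prod>i\<in>I. emeasure (A \<Otimes>\<^sub>M B) (C i))" .
  qed
qed



abbreviation "U01 \<equiv> uniform_measure lborel {0..(1::real)}"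

lemma U01_prob: "prob_space U01"
  by (intro prob_space_uniform_measure) auto

lemma space_U01: "space U01 = UNIV" by simp

lemma unif_emeasure:
  fixes p :: real and b :: "real set"
  assumes p: "0 \<le> p" "p \<le> 1"
  shows "emeasure U01 {u. (if u \<le> p then 1 else 0::real) \<in> b}
       = ennreal ((if (1::real) \<in> b then p else 0) + (if (0::real) \<in> b then 1 - p else 0))"
proof -
  have gen: "emeasure U01 B = emeasure lborel ({0..1} \<inter> B)" if "B \<in> sets borel" for B
    using that by (subst emeasure_uniform_measure) (auto simp: divide_ennreal_def)
  show ?thesis
  proof (cases "(1::real) \<in> b"; cases "(0::real) \<in> b")
    assume "1 \<in> b" "0 \<in> b"
    then have "{u. (if u \<le> p then 1 else 0::real) \<in> b} = UNIV" by auto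
    then show ?thesis using \<open>1 \<in> b\<close> \<open>0 \<in> b\<close> by (simp add: gen divide_ennreal_def)
  next
    assume "1 \<in> b" "0 \<notin> b"
    then have "{u. (if u \<le> p then 1 else 0::real) \<in> b} = {..p}" by auto
    moreover have "{0..1} \<inter> {..p} = {0..p}" using p by auto
    ultimately show ?thesis using \<open>1 \<in> b\<close> \<open>0 \<notin> b\<close> p by (simp add: gen divide_ennreal_def)
  next
    assume "1 \<notin> b" "0 \<in> b"
    then have "{u. (if u \<le> p then 1 else 0::real) \<in> b} = {p<..}" by auto
    moreover have "{0..1} \<inter> {p<..} = {p<..1}" using p by auto
    ultimately show ?thesis using \<open>1 \<notin> b\<close> \<open>0 \<in> b\<close> p by (simp add: gen divide_ennreal_def)
  next
    assume "1 \<notin> b" "0 \<notin> b"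
    then have "{u. (if u \<le> p then 1 else 0::real) \<in> b} = {}" by auto
    then show ?thesis using \<open>1 \<notin> b\<close> \<open>0 \<notin> b\<close> by simp
  qed
qed

lemma coupling_law:
  fixes X1 :: "'a \<Rightarrow> 'x" and Y1 :: "'a \<Rightarrow> real" and q :: "'x \<Rightarrow> real"
  assumes P: "prob_space M"
    and Xm: "X1 \<in> measurable M MX" and Ym: "Y1 \<in> borel_measurable M"
    and Y01: "\<forall>\<omega>\<in>space M. Y1 \<omega> \<in> {0,1}"
    and qm: "q \<in> borel_measurable MX" and q01: "\<forall>x. q x \<in> {0..1}"
    and cp: "\<forall>A\<in>sets MX. measure M {\<omega>\<in>space M. X1 \<omega> \<in> A \<and> Y1 \<omega> = 1}
                = (\<integral>\<omega>. indicator A (X1 \<omega>) * q (X1 \<omega>) \<partial>M)"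
  shows "distr M (MX \<Otimes>\<^sub>M borel) (\<lambda>\<omega>. (X1 \<omega>, Y1 \<omega>))
       = distr (distr M MX X1 \<Otimes>\<^sub>M U01) (MX \<Otimes>\<^sub>M borel) (\<lambda>(x,u). (x, if u \<le> q x then 1 else 0))"
proof -
  interpret prob_space M by fact
  interpret U: prob_space U01 by (rule U01_prob)
  interpret XD: prob_space "distr M MX X1" by (intro prob_space_distr Xm)
  let ?E = "{a \<times> b | a b. a \<in> sets MX \<and> b \<in> sets (borel :: real measure)}"
  let ?\<Omega> = "space MX \<times> (UNIV :: real set)"
  let ?phi = "\<lambda>(x,u). (x, if u \<le> q x then 1 else (0::real))"
  have phim: "?phi \<in> measurable (distr M MX X1 \<Otimes>\<^sub>M U01) (MX \<Otimes>\<^sub>M borel)"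
    using qm by measurable
  have Zm: "(\<lambda>\<omega>. (X1 \<omega>, Y1 \<omega>)) \<in> measurable M (MX \<Otimes>\<^sub>M borel)" using Xm Ym by measurable
  have setsP: "sets (MX \<Otimes>\<^sub>M borel) = sigma_sets ?\<Omega> ?E"
    by (simp add: sets_pair_measure)
  show ?thesis
  proof (rule measure_eqI_generator_eq[where E="?E" and \<Omega>="?\<Omega>" and A="\<lambda>_. ?\<Omega>"])
    show "Int_stable ?E" by (rule Int_stable_pair_measure_generator)
    show "?E \<subseteq> Pow ?\<Omega>" using sets.sets_into_space by fastforce
    show "sets (distr M (MX \<Otimes>\<^sub>M borel) (\<lambda>\<omega>. (X1 \<omega>, Y1 \<omega>))) = sigma_sets ?\<Omega> ?E"
      using setsP by simp
    show "sets (distr (distr M MX X1 \<Otimes>\<^sub>M U01) (MX \<Otimes>\<^sub>M borel) ?phi) = sigma_sets ?\<Omega> ?E"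
      using setsP by simp
    have "?\<Omega> \<in> ?E" using sets.top[of MX] by (intro CollectI exI[where x="space MX"] exI[where x=UNIV]) auto
    then show "range (\<lambda>_. ?\<Omega>) \<subseteq> ?E" by auto
    show "(\<Union>i::nat. ?\<Omega>) = ?\<Omega>" by simp
    show "emeasure (distr M (MX \<Otimes>\<^sub>M borel) (\<lambda>\<omega>. (X1 \<omega>, Y1 \<omega>))) ?\<Omega> \<noteq> \<infinity>"
    proof -
      interpret D: prob_space "distr M (MX \<Otimes>\<^sub>M borel) (\<lambda>\<omega>. (X1 \<omega>, Y1 \<omega>))" by (intro prob_space_distr Zm)
      show ?thesis by simp
    qed
  next
    fix C assume "C \<in> ?E"
    then obtain a b where C: "C = a \<times> b" and a: "a \<in> sets MX" and b: "b \<in> sets (borel :: real measure)" by auto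
    define c1 where "c1 = (if (1::real) \<in> b then 1 else (0::real))"
    define c0 where "c0 = (if (0::real) \<in> b then 1 else (0::real))"
    define h where "h p = c1 * p + c0 * (1 - p)" for p :: real
    define m1 where "m1 = (\<integral>\<omega>. indicator a (X1 \<omega>) * q (X1 \<omega>) \<partial>M)"
    define mX where "mX = measure M {\<omega>\<in>space M. X1 \<omega> \<in> a}"
    have hnn: "0 \<le> h p" if "0 \<le> p" "p \<le> 1" for p
      unfolding h_def c1_def c0_def using that by auto
    have Sm: "{\<omega>\<in>space M. X1 \<omega> \<in> a} \<in> sets M" using Xm a by measurable
    have S1m: "{\<omega>\<in>space M. X1 \<omega> \<in> a \<and> Y1 \<omega> = 1} \<in> sets M" using Xm Ym a by measurable
    have m1eq: "measure M {\<omega>\<in>space M. X1 \<omega> \<in> a \<and> Y1 \<omega> = 1} = m1"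
      using cp a unfolding m1_def by auto
    have L: "measure M {\<omega>\<in>space M. X1 \<omega> \<in> a \<and> Y1 \<omega> \<in> b} = c1 * m1 + c0 * (mX - m1)"
    proof (cases "(1::real) \<in> b"; cases "(0::real) \<in> b")
      assume "1 \<in> b" "0 \<in> b"
      then have "{\<omega>\<in>space M. X1 \<omega> \<in> a \<and> Y1 \<omega> \<in> b} = {\<omega>\<in>space M. X1 \<omega> \<in> a}" using Y01 by auto
      then show ?thesis using \<open>1 \<in> b\<close> \<open>0 \<in> b\<close> unfolding c1_def c0_def mX_def by simp
    next
      assume "1 \<in> b" "0 \<notin> b"
      then have "{\<omega>\<in>space M. X1 \<omega> \<in> a \<and> Y1 \<omega> \<in> b} = {\<omega>\<in>space M. X1 \<omega> \<in> a \<and> Y1 \<omega> = 1}" using Y01 by auto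
      then show ?thesis using \<open>1 \<in> b\<close> \<open>0 \<notin> b\<close> m1eq unfolding c1_def c0_def by simp
    next
      assume "1 \<notin> b" "0 \<in> b"
      then have "{\<omega>\<in>space M. X1 \<omega> \<in> a \<and> Y1 \<omega> \<in> b} = {\<omega>\<in>space M. X1 \<omega> \<in> a} - {\<omega>\<in>space M. X1 \<omega> \<in> a \<and> Y1 \<omega> = 1}"
        using Y01 by auto
      moreover have "measure M ({\<omega>\<in>space M. X1 \<omega> \<in> a} - {\<omega>\<in>space M. X1 \<omega> \<in> a \<and> Y1 \<omega> = 1}) = mX - m1"
        using Sm S1m m1eq unfolding mX_def by (subst finite_measure_Diff) auto
      ultimately show ?thesis using \<open>1 \<notin> b\<close> \<open>0 \<in> b\<close> unfolding c1_def c0_def by simp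
    next
      assume "1 \<notin> b" "0 \<notin> b"
      then have "{\<omega>\<in>space M. X1 \<omega> \<in> a \<and> Y1 \<omega> \<in> b} = {}" using Y01 by auto
      then have "measure M {\<omega>\<in>space M. X1 \<omega> \<in> a \<and> Y1 \<omega> \<in> b} = 0" by (metis measure_empty)
      then show ?thesis using \<open>1 \<notin> b\<close> \<open>0 \<notin> b\<close> unfolding c1_def c0_def by simp
    qed
    have intInd: "(\<integral>\<omega>. indicator a (X1 \<omega>) \<partial>M) = mX"
    proof -
      have "(\<integral>\<omega>. indicator a (X1 \<omega>) \<partial>M) = (\<integral>\<omega>. indicator {\<omega>\<in>space M. X1 \<omega> \<in> a} \<omega> \<partial>M)"
        by (intro Bochner_Integration.integral_cong) (auto simp: indicator_def)
      also have "\<dots> = mX" unfolding mX_def using Sm by simp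
      finally show ?thesis .
    qed
    have int1: "integrable M (\<lambda>\<omega>. indicator a (X1 \<omega>) * q (X1 \<omega>) :: real)"
      using Xm qm a q01 by (intro integrable_const_bound[where B=1]) (auto simp: indicator_def)
    have int2: "integrable M (\<lambda>\<omega>. indicator a (X1 \<omega>) :: real)"
      using Xm a by (intro integrable_const_bound[where B=1]) (auto simp: indicator_def)
    have R0: "(\<integral>\<omega>. indicator a (X1 \<omega>) * h (q (X1 \<omega>)) \<partial>M) = c1 * m1 + c0 * (mX - m1)"
    proof -
      have "(\<lambda>\<omega>. indicator a (X1 \<omega>) * h (q (X1 \<omega>)))
          = (\<lambda>\<omega>. c1 * (indicator a (X1 \<omega>) * q (X1 \<omega>)) + c0 * (indicator a (X1 \<omega>) - indicator a (X1 \<omega>) * q (X1 \<omega>)))"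
        unfolding h_def by (intro ext) (simp add: algebra_simps)
      then show ?thesis
        using int1 int2 intInd unfolding m1_def by simp
    qed
    have intR: "integrable M (\<lambda>\<omega>. indicator a (X1 \<omega>) * h (q (X1 \<omega>)))"
      using Xm qm a q01 unfolding h_def c1_def c0_def
      by (intro integrable_const_bound[where B=2] AE_I2) (auto simp: indicator_def, (smt (verit) q01 atLeastAtMost_iff)+)
    have "emeasure (distr (distr M MX X1 \<Otimes>\<^sub>M U01) (MX \<Otimes>\<^sub>M borel) ?phi) (a \<times> b)
        = emeasure (distr M MX X1 \<Otimes>\<^sub>M U01) (?phi -` (a \<times> b) \<inter> space (distr M MX X1 \<Otimes>\<^sub>M U01))"
      using phim a b by (intro emeasure_distr) auto
    also have "\<dots> = (\<integral>\<^sup>+x. emeasure U01 (Pair x -` (?phi -` (a \<times> b) \<inter> space (distr M MX X1 \<Otimes>\<^sub>M U01))) \<partial>distr M MX X1)"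
      using phim a b by (intro U.emeasure_pair_measure_alt measurable_sets[OF phim]) auto
    also have "\<dots> = (\<integral>\<^sup>+x. ennreal (indicator a x * h (q x)) \<partial>distr M MX X1)"
    proof (rule nn_integral_cong)
      fix x assume x: "x \<in> space (distr M MX X1)"
      show "emeasure U01 (Pair x -` (?phi -` (a \<times> b) \<inter> space (distr M MX X1 \<Otimes>\<^sub>M U01))) = ennreal (indicator a x * h (q x))"
      proof (cases "x \<in> a")
        case True
        then have "Pair x -` (?phi -` (a \<times> b) \<inter> space (distr M MX X1 \<Otimes>\<^sub>M U01)) = {u. (if u \<le> q x then 1 else 0::real) \<in> b}"
          using x by (auto simp: space_pair_measure)
        then show ?thesis using True unif_emeasure[of "q x" b] q01 unfolding h_def c1_def c0_def by auto
      next
        case False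
        then have "Pair x -` (?phi -` (a \<times> b) \<inter> space (distr M MX X1 \<Otimes>\<^sub>M U01)) = {}"
          by auto
        then show ?thesis using False by simp
      qed
    qed
    also have "\<dots> = (\<integral>\<^sup>+\<omega>. ennreal (indicator a (X1 \<omega>) * h (q (X1 \<omega>))) \<partial>M)"
      using Xm qm a unfolding h_def by (intro nn_integral_distr) auto
    also have "\<dots> = ennreal (\<integral>\<omega>. indicator a (X1 \<omega>) * h (q (X1 \<omega>)) \<partial>M)"
      using intR q01 hnn by (intro nn_integral_eq_integral) (auto simp: indicator_def)
    also have "\<dots> = ennreal (measure M {\<omega>\<in>space M. X1 \<omega> \<in> a \<and> Y1 \<omega> \<in> b})"
      using R0 L by simp
    also have "\<dots> = emeasure (distr M (MX \<Otimes>\<^sub>M borel) (\<lambda>\<omega>. (X1 \<omega>, Y1 \<omega>))) (a \<times> b)"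
    proof -
      have "(\<lambda>\<omega>. (X1 \<omega>, Y1 \<omega>)) -` (a \<times> b) \<inter> space M = {\<omega>\<in>space M. X1 \<omega> \<in> a \<and> Y1 \<omega> \<in> b}" by auto
      then show ?thesis using Zm a b by (simp add: emeasure_distr emeasure_eq_measure)
    qed
    finally show "emeasure (distr M (MX \<Otimes>\<^sub>M borel) (\<lambda>\<omega>. (X1 \<omega>, Y1 \<omega>))) C
        = emeasure (distr (distr M MX X1 \<Otimes>\<^sub>M U01) (MX \<Otimes>\<^sub>M borel) ?phi) C"
      unfolding C by simp
  qed
qed



lemma test_law:
  assumes fin: "finite I" and PA: "prob_space A" and PB: "prob_space B"
    and phim: "phi \<in> measurable (A \<Otimes>\<^sub>M B) N"
  shows "PiM I (\<lambda>_. distr (A \<Otimes>\<^sub>M B) N phi)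
       = distr (PiM I (\<lambda>_. A) \<Otimes>\<^sub>M PiM I (\<lambda>_. B)) (PiM I (\<lambda>_. N)) (\<lambda>(f,g). \<lambda>i\<in>I. phi (f i, g i))"
proof -
  define \<nu> where "\<nu> = distr (A \<Otimes>\<^sub>M B) N phi"
  have PAB: "prob_space (A \<Otimes>\<^sub>M B)" by (intro prob_space_pair PA PB)
  have PN: "prob_space \<nu>" unfolding \<nu>_def by (rule prob_space.prob_space_distr[OF PAB phim])
  have sN: "sets \<nu> = sets N" unfolding \<nu>_def by simp
  have phim': "phi \<in> measurable (A \<Otimes>\<^sub>M B) \<nu>" using phim measurable_cong_sets[OF refl sN] by blast
  have nn: "distr (A \<Otimes>\<^sub>M B) \<nu> phi = \<nu>" unfolding \<nu>_def by (intro distr_cong) auto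
  have "PiM I (\<lambda>_. \<nu>) = PiM I (\<lambda>_. distr (A \<Otimes>\<^sub>M B) \<nu> phi)" by (simp add: nn)
  also have "\<dots> = distr (PiM I (\<lambda>_. A \<Otimes>\<^sub>M B)) (PiM I (\<lambda>_. \<nu>)) (compose I phi)"
    using fin PAB phim' PN by (intro distr_PiM_finite_prob_space'[symmetric]) auto
  also have "\<dots> = distr (distr (PiM I (\<lambda>_. A) \<Otimes>\<^sub>M PiM I (\<lambda>_. B)) (PiM I (\<lambda>_. A \<Otimes>\<^sub>M B)) (\<lambda>(f,g). \<lambda>i\<in>I. (f i, g i)))
                  (PiM I (\<lambda>_. \<nu>)) (compose I phi)"
    by (subst distr_zip_PiM[OF fin PA PB]) simp
  also have "\<dots> = distr (PiM I (\<lambda>_. A) \<Otimes>\<^sub>M PiM I (\<lambda>_. B)) (PiM I (\<lambda>_. \<nu>)) (compose I phi \<circ> (\<lambda>(f,g). \<lambda>i\<in>I. (f i, g i)))"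
  proof (rule distr_distr)
    show "compose I phi \<in> measurable (PiM I (\<lambda>_. A \<Otimes>\<^sub>M B)) (PiM I (\<lambda>_. \<nu>))"
      unfolding compose_def using phim' by measurable
    show "(\<lambda>(f,g). \<lambda>i\<in>I. (f i, g i)) \<in> measurable (PiM I (\<lambda>_. A) \<Otimes>\<^sub>M PiM I (\<lambda>_. B)) (PiM I (\<lambda>_. A \<Otimes>\<^sub>M B))"
      by measurable
  qed
  also have "\<dots> = distr (PiM I (\<lambda>_. A) \<Otimes>\<^sub>M PiM I (\<lambda>_. B)) (PiM I (\<lambda>_. N)) (\<lambda>(f,g). \<lambda>i\<in>I. phi (f i, g i))"
    using sN by (intro distr_cong sets_PiM_cong) (auto simp: compose_def)
  finally show ?thesis unfolding \<nu>_def .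
qed



lemma g_comp_meas:
  fixes g :: "'l \<Rightarrow> (nat \<Rightarrow> 'x \<times> real) \<Rightarrow> 'x \<Rightarrow> real"
  assumes gm: "(\<lambda>(D, x). g l D x) \<in> borel_measurable (PiM {1..n1} (\<lambda>_. MX \<Otimes>\<^sub>M borel) \<Otimes>\<^sub>M MX)"
    and n1n: "n1 \<le> n" and i: "i \<in> {1..n}"
    and f: "f \<in> measurable N (PiM {1..n} (\<lambda>_. MX \<Otimes>\<^sub>M borel))"
  shows "(\<lambda>p. g l (restrict (f p) {1..n1}) (fst (f p i))) \<in> borel_measurable N"
proof -
  have "(\<lambda>z. (restrict z {1..n1}, fst (z i))) \<in> measurable (PiM {1..n} (\<lambda>_. MX \<Otimes>\<^sub>M borel)) (PiM {1..n1} (\<lambda>_. MX \<Otimes>\<^sub>M borel) \<Otimes>\<^sub>M MX)"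
    using n1n by (intro measurable_Pair measurable_restrict_subset measurable_compose[OF measurable_component_singleton[OF i] measurable_fst]) auto
  from measurable_comp[OF measurable_comp[OF f this] gm] show ?thesis by (simp add: o_def)
qed

lemma Ts_meas:
  fixes g :: "'l \<Rightarrow> (nat \<Rightarrow> 'x \<times> real) \<Rightarrow> 'x \<Rightarrow> real"
  assumes fin: "finite \<Lambda>" and ph: "phat \<in> borel_measurable MX" and n1n: "n1 \<le> n"
    and gm: "\<forall>l\<in>\<Lambda>. (\<lambda>(D, x). g l D x) \<in> borel_measurable (PiM {1..n1} (\<lambda>_. MX \<Otimes>\<^sub>M borel) \<Otimes>\<^sub>M MX)"
  shows "(\<lambda>z. split_stat phat \<delta> \<Lambda> (\<lambda>l. g l (restrict z {1..n1})) n1 n (\<lambda>i. fst (z i)) (\<lambda>l i. snd (z i)))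
          \<in> borel_measurable (PiM {1..n} (\<lambda>_. MX \<Otimes>\<^sub>M borel))"
proof (rule split_stat_meas[OF fin ph])
  fix i assume i: "i \<in> {n1<..n}"
  then have i': "i \<in> {1..n}" by auto
  show "(\<lambda>z. fst (z i)) \<in> measurable (PiM {1..n} (\<lambda>_. MX \<Otimes>\<^sub>M borel)) MX"
    by (rule measurable_compose[OF measurable_component_singleton[OF i'] measurable_fst])
  fix l assume l: "l \<in> \<Lambda>"
  show "(\<lambda>z. g l (restrict z {1..n1}) (fst (z i))) \<in> borel_measurable (PiM {1..n} (\<lambda>_. MX \<Otimes>\<^sub>M borel))"
    using g_comp_meas[where g=g and l=l, OF gm[rule_format, OF l] n1n i' measurable_ident_sets[OF refl]] by simp
  show "(\<lambda>z. snd (z i)) \<in> borel_measurable (PiM {1..n} (\<lambda>_. MX \<Otimes>\<^sub>M borel))"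
    by (rule measurable_compose[OF measurable_component_singleton[OF i'] measurable_snd])
qed

lemma Tb_meas:
  fixes g :: "'l \<Rightarrow> (nat \<Rightarrow> 'x \<times> real) \<Rightarrow> 'x \<Rightarrow> real"
  assumes fin: "finite \<Lambda>" and ph: "phat \<in> borel_measurable MX" and n1n: "n1 \<le> n"
    and gm: "\<forall>l\<in>\<Lambda>. (\<lambda>(D, x). g l D x) \<in> borel_measurable (PiM {1..n1} (\<lambda>_. MX \<Otimes>\<^sub>M borel) \<Otimes>\<^sub>M MX)"
  shows "(\<lambda>p. split_stat phat \<delta> \<Lambda> (\<lambda>l. g l (restrict (fst p) {1..n1})) n1 n (\<lambda>i. fst (fst p i))
            (boot_response phat \<delta> (\<lambda>l. g l (restrict (fst p) {1..n1})) (\<lambda>i. fst (fst p i)) (snd p)))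
          \<in> borel_measurable (PiM {1..n} (\<lambda>_. MX \<Otimes>\<^sub>M borel) \<Otimes>\<^sub>M boot_law n1 n)"
proof (rule split_stat_meas[OF fin ph])
  fix i assume i: "i \<in> {n1<..n}"
  then have i': "i \<in> {1..n}" by auto
  have fm: "fst \<in> measurable (PiM {1..n} (\<lambda>_. MX \<Otimes>\<^sub>M borel) \<Otimes>\<^sub>M boot_law n1 n) (PiM {1..n} (\<lambda>_. MX \<Otimes>\<^sub>M borel))"
    by (rule measurable_fst)
  show xm: "(\<lambda>p. fst (fst p i)) \<in> measurable (PiM {1..n} (\<lambda>_. MX \<Otimes>\<^sub>M borel) \<Otimes>\<^sub>M boot_law n1 n) MX"
    by (rule measurable_compose[OF fm measurable_compose[OF measurable_component_singleton[OF i'] measurable_fst]])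
  fix l assume l: "l \<in> \<Lambda>"
  have gl: "(\<lambda>p. g l (restrict (fst p) {1..n1}) (fst (fst p i))) \<in> borel_measurable (PiM {1..n} (\<lambda>_. MX \<Otimes>\<^sub>M borel) \<Otimes>\<^sub>M boot_law n1 n)"
    by (rule g_comp_meas[where g=g and l=l, OF gm[rule_format, OF l] n1n i' fm])
  then show "(\<lambda>p. g l (restrict (fst p) {1..n1}) (fst (fst p i))) \<in> borel_measurable (PiM {1..n} (\<lambda>_. MX \<Otimes>\<^sub>M borel) \<Otimes>\<^sub>M boot_law n1 n)" .
  have sm0: "(\<lambda>p. snd p i) \<in> measurable (PiM {1..n} (\<lambda>_. MX \<Otimes>\<^sub>M borel) \<Otimes>\<^sub>M boot_law n1 n) U01"
    unfolding boot_law_def by (rule measurable_compose[OF measurable_snd measurable_component_singleton[OF i]])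
  have "measurable (PiM {1..n} (\<lambda>_. MX \<Otimes>\<^sub>M borel) \<Otimes>\<^sub>M boot_law n1 n) U01 = borel_measurable (PiM {1..n} (\<lambda>_. MX \<Otimes>\<^sub>M borel) \<Otimes>\<^sub>M boot_law n1 n)"
    by (rule measurable_cong_sets) simp_all
  then have sm: "(\<lambda>p. snd p i) \<in> borel_measurable (PiM {1..n} (\<lambda>_. MX \<Otimes>\<^sub>M borel) \<Otimes>\<^sub>M boot_law n1 n)"
    using sm0 by metis
  have phx: "(\<lambda>p. phat (fst (fst p i))) \<in> borel_measurable (PiM {1..n} (\<lambda>_. MX \<Otimes>\<^sub>M borel) \<Otimes>\<^sub>M boot_law n1 n)"
    using measurable_comp[OF xm ph] by (simp add: o_def)
  note [measurable] = gl sm phx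
  show "(\<lambda>p. boot_response phat \<delta> (\<lambda>l. g l (restrict (fst p) {1..n1})) (\<lambda>i. fst (fst p i)) (snd p) l i)
          \<in> borel_measurable (PiM {1..n} (\<lambda>_. MX \<Otimes>\<^sub>M borel) \<Otimes>\<^sub>M boot_law n1 n)"
  proof -
    let ?N = "PiM {1..n} (\<lambda>_. MX \<Otimes>\<^sub>M borel) \<Otimes>\<^sub>M boot_law n1 n"
    have r: "(\<lambda>p. phat (fst (fst p i)) + \<delta> * sgn (g l (restrict (fst p) {1..n1}) (fst (fst p i)))) \<in> borel_measurable ?N"
      using phx gl by (intro borel_measurable_add borel_measurable_times borel_measurable_const) (auto intro: measurable_compose[OF _ borel_measurable_sgn])
    have pr: "{p \<in> space ?N. snd p i \<le> phat (fst (fst p i)) + \<delta> * sgn (g l (restrict (fst p) {1..n1}) (fst (fst p i)))} \<in> sets ?N"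
      using sm r by (rule borel_measurable_le)
    show ?thesis unfolding boot_response_def
      using pr by (intro measurable_If measurable_const) (auto simp: pred_def)
  qed
qed



lemma split_stat_empty:
  assumes "n \<le> n1" "finite \<Lambda>" "\<Lambda> \<noteq> {}"
  shows "split_stat ph \<delta> \<Lambda> gg n1 n x y = 0"
proof -
  have "{n1<..n} = {}" using assms by auto
  then have "(\<lambda>(l, j). sterm ph \<delta> gg n1 n x y l (cand gg n1 n x l j)) ` (\<Lambda> \<times> insert 0 {n1<..n}) = {0}"
    using assms by (auto simp: sterm_def)
  then show ?thesis unfolding split_stat_alt by simp
qed

lemma boot_resp01: "boot_response ph \<delta> gg x v l i \<in> {0,1}"
  unfolding boot_response_def by auto

lemma boot_law_prob: "prob_space (boot_law n1 n)"
  unfolding boot_law_def by (intro prob_space_PiM U01_prob)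

theorem theorem4:
  fixes M :: "'a measure" and MX :: "'x measure"
    and X :: "nat \<Rightarrow> 'a \<Rightarrow> 'x" and Y :: "nat \<Rightarrow> 'a \<Rightarrow> real"
    and phat p0 :: "'x \<Rightarrow> real" and \<delta> \<alpha> :: real and n n1 :: nat
    and \<Lambda> :: "'l set" and g :: "'l \<Rightarrow> (nat \<Rightarrow> 'x \<times> real) \<Rightarrow> 'x \<Rightarrow> real"
  assumes P: "prob_space M"
    and indep: "prob_space.indep_vars M (\<lambda>_. MX \<Otimes>\<^sub>M borel) (\<lambda>i \<omega>. (X i \<omega>, Y i \<omega>)) {1..n}"
    and ident: "\<forall>i\<in>{1..n}. distr M (MX \<Otimes>\<^sub>M borel) (\<lambda>\<omega>. (X i \<omega>, Y i \<omega>))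
                          = distr M (MX \<Otimes>\<^sub>M borel) (\<lambda>\<omega>. (X 1 \<omega>, Y 1 \<omega>))"
    and Y01: "\<forall>i\<in>{1..n}. \<forall>\<omega>\<in>space M. Y i \<omega> \<in> {0, 1}"
    and p0_meas: "p0 \<in> borel_measurable MX"
    and p0_range: "\<forall>x. p0 x \<in> {0..1}"
    and condprob: "\<forall>i\<in>{1..n}. \<forall>A\<in>sets MX.
        measure M {\<omega> \<in> space M. X i \<omega> \<in> A \<and> Y i \<omega> = 1}
          = (\<integral>\<omega>. indicator A (X i \<omega>) * p0 (X i \<omega>) \<partial>M)"
    and phat_meas: "phat \<in> borel_measurable MX"
    and phat_range: "\<forall>x. phat x \<in> {0..1}"
    and delta: "\<delta> \<ge> 0"
    and null: "\<forall>i\<in>{1..n}. measure M {\<omega> \<in> space M. \<bar>phat (X i \<omega>) - p0 (X i \<omega>)\<bar> > \<delta>} = 0"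
    and n1n: "n1 \<le> n"
    and Lfin: "finite \<Lambda>" and Lne: "\<Lambda> \<noteq> {}"
    and g_meas: "\<forall>l\<in>\<Lambda>. (\<lambda>(D, x). g l D x)
                   \<in> borel_measurable (PiM {1..n1} (\<lambda>_. MX \<Otimes>\<^sub>M borel) \<Otimes>\<^sub>M MX)"
    and g_bdd: "\<forall>l\<in>\<Lambda>. \<exists>B. \<forall>D x. \<bar>g l D x\<bar> \<le> B"
    and alpha: "0 < \<alpha>" "\<alpha> < 1"
  shows "\<exists>A\<in>sets M.
     {\<omega> \<in> space M.
        split_stat phat \<delta> \<Lambda> (\<lambda>l. g l (training_data n1 X Y \<omega>)) n1 n (\<lambda>i. X i \<omega>) (\<lambda>l i. Y i \<omega>)
        > quantile_upper (boot_law n1 n)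
            (\<lambda>u. split_stat phat \<delta> \<Lambda> (\<lambda>l. g l (training_data n1 X Y \<omega>)) n1 n (\<lambda>i. X i \<omega>)
                    (boot_response phat \<delta> (\<lambda>l. g l (training_data n1 X Y \<omega>)) (\<lambda>i. X i \<omega>) u))
            \<alpha>}
     \<subseteq> A \<and> measure M A \<le> \<alpha>"
proof -
  interpret prob_space M by (rule P)
  interpret B: prob_space "boot_law n1 n" by (rule boot_law_prob)
  let ?MZ = "MX \<Otimes>\<^sub>M (borel :: real measure)"
  let ?PZ = "PiM {1..n} (\<lambda>_. ?MZ)"
  let ?B = "boot_law n1 n"
  define Ts where "Ts z = split_stat phat \<delta> \<Lambda> (\<lambda>l. g l (restrict z {1..n1})) n1 n (\<lambda>i. fst (z i)) (\<lambda>l i. snd (z i))" for z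
  define Tb where "Tb z v = split_stat phat \<delta> \<Lambda> (\<lambda>l. g l (restrict z {1..n1})) n1 n (\<lambda>i. fst (z i))
          (boot_response phat \<delta> (\<lambda>l. g l (restrict z {1..n1})) (\<lambda>i. fst (z i)) v)" for z v
  define Zm where "Zm \<omega> = (\<lambda>i\<in>{1..n}. (X i \<omega>, Y i \<omega>))" for \<omega>
  define R where "R = {z\<in>space ?PZ. 1 - \<alpha> \<le> measure ?B {v\<in>space ?B. Tb z v < Ts z}}"
  have rv: "(\<lambda>\<omega>. (X i \<omega>, Y i \<omega>)) \<in> measurable M ?MZ" if "i \<in> {1..n}" for i
    using indep that unfolding indep_vars_def by auto
  have Xm: "X i \<in> measurable M MX" if "i \<in> {1..n}" for i
    using measurable_compose[OF rv[OF that] measurable_fst] by simp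
  have Ym: "Y i \<in> borel_measurable M" if "i \<in> {1..n}" for i
    using measurable_compose[OF rv[OF that] measurable_snd] by simp
  have Zmm: "Zm \<in> measurable M ?PZ" unfolding Zm_def using rv by (intro measurable_restrict) auto
  have Tsm: "Ts \<in> borel_measurable ?PZ"
    unfolding Ts_def using Ts_meas[OF Lfin phat_meas n1n g_meas] .
  have Tbm: "(\<lambda>p. Tb (fst p) (snd p)) \<in> borel_measurable (?PZ \<Otimes>\<^sub>M ?B)"
    unfolding Tb_def using Tb_meas[OF Lfin phat_meas n1n g_meas] .
  have Tbm1: "Tb z \<in> borel_measurable ?B" if "z \<in> space ?PZ" for z
    using measurable_Pair2[OF Tbm that] by simp
  have Tbbd: "\<bar>Tb z v\<bar> \<le> (\<Sum>l\<in>\<Lambda>. \<Sum>i\<in>{n1<..n}. \<bar>g l (restrict z {1..n1}) (fst (z i))\<bar>)" for z v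
    unfolding Tb_def by (rule split_stat_bound[OF Lfin Lne]) (auto simp: boot_response_def)
  have Rm: "R \<in> sets ?PZ"
  proof -
    have Tsf: "(\<lambda>p. Ts (fst p)) \<in> borel_measurable (?PZ \<Otimes>\<^sub>M ?B)"
      by (rule measurable_compose[OF measurable_fst Tsm])
    have Q2m: "{p \<in> space (?PZ \<Otimes>\<^sub>M ?B). Tb (fst p) (snd p) < Ts (fst p)} \<in> sets (?PZ \<Otimes>\<^sub>M ?B)"
      using Tbm Tsf by (rule borel_measurable_less)
    have em: "(\<lambda>z. emeasure ?B (Pair z -` {p \<in> space (?PZ \<Otimes>\<^sub>M ?B). Tb (fst p) (snd p) < Ts (fst p)})) \<in> borel_measurable ?PZ"
      by (rule B.measurable_emeasure_Pair[OF Q2m])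
    have fm: "(\<lambda>z. measure ?B {v\<in>space ?B. Tb z v < Ts z}) \<in> borel_measurable ?PZ"
    proof (rule measurable_cong[THEN iffD1, OF _ borel_measurable_enn2real[OF em]])
      fix z assume z: "z \<in> space ?PZ"
      have "Pair z -` {p \<in> space (?PZ \<Otimes>\<^sub>M ?B). Tb (fst p) (snd p) < Ts (fst p)} = {v\<in>space ?B. Tb z v < Ts z}"
        using z by (auto simp: space_pair_measure)
      then show "enn2real (emeasure ?B (Pair z -` {p \<in> space (?PZ \<Otimes>\<^sub>M ?B). Tb (fst p) (snd p) < Ts (fst p)}))
               = measure ?B {v\<in>space ?B. Tb z v < Ts z}"
        by (simp add: measure_def)
    qed
    show ?thesis unfolding R_def using borel_measurable_const fm by (rule borel_measurable_le)
  qed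
  define A where "A = Zm -` R \<inter> space M"
  have Am: "A \<in> sets M" unfolding A_def using Zmm Rm by measurable
  have sub: "{\<omega> \<in> space M.
        split_stat phat \<delta> \<Lambda> (\<lambda>l. g l (training_data n1 X Y \<omega>)) n1 n (\<lambda>i. X i \<omega>) (\<lambda>l i. Y i \<omega>)
        > quantile_upper (boot_law n1 n)
            (\<lambda>u. split_stat phat \<delta> \<Lambda> (\<lambda>l. g l (training_data n1 X Y \<omega>)) n1 n (\<lambda>i. X i \<omega>)
                    (boot_response phat \<delta> (\<lambda>l. g l (training_data n1 X Y \<omega>)) (\<lambda>i. X i \<omega>) u))
            \<alpha>} \<subseteq> A"
  proof
    fix \<omega> assume "\<omega> \<in> {\<omega> \<in> space M.
        split_stat phat \<delta> \<Lambda> (\<lambda>l. g l (training_data n1 X Y \<omega>)) n1 n (\<lambda>i. X i \<omega>) (\<lambda>l i. Y i \<omega>)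
        > quantile_upper (boot_law n1 n)
            (\<lambda>u. split_stat phat \<delta> \<Lambda> (\<lambda>l. g l (training_data n1 X Y \<omega>)) n1 n (\<lambda>i. X i \<omega>)
                    (boot_response phat \<delta> (\<lambda>l. g l (training_data n1 X Y \<omega>)) (\<lambda>i. X i \<omega>) u))
            \<alpha>}"
    then have \<omega>: "\<omega> \<in> space M" and ev: "split_stat phat \<delta> \<Lambda> (\<lambda>l. g l (training_data n1 X Y \<omega>)) n1 n (\<lambda>i. X i \<omega>) (\<lambda>l i. Y i \<omega>)
        > quantile_upper (boot_law n1 n)
            (\<lambda>u. split_stat phat \<delta> \<Lambda> (\<lambda>l. g l (training_data n1 X Y \<omega>)) n1 n (\<lambda>i. X i \<omega>)
                    (boot_response phat \<delta> (\<lambda>l. g l (training_data n1 X Y \<omega>)) (\<lambda>i. X i \<omega>) u))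
            \<alpha>" by auto
    define z where "z = Zm \<omega>"
    have z: "z \<in> space ?PZ" unfolding z_def using Zmm \<omega> by (rule measurable_space)
    have rz: "restrict z {1..n1} = training_data n1 X Y \<omega>"
      unfolding z_def Zm_def training_data_def using n1n by (auto simp: restrict_def)
    have fz: "fst (z i) = X i \<omega>" "snd (z i) = Y i \<omega>" if "i \<in> {n1<..n}" for i
      using that unfolding z_def Zm_def by auto
    have e1: "split_stat phat \<delta> \<Lambda> (\<lambda>l. g l (training_data n1 X Y \<omega>)) n1 n (\<lambda>i. X i \<omega>) (\<lambda>l i. Y i \<omega>) = Ts z"
      unfolding Ts_def rz by (rule split_stat_cong) (auto simp: fz)
    have e2: "(\<lambda>u. split_stat phat \<delta> \<Lambda> (\<lambda>l. g l (training_data n1 X Y \<omega>)) n1 n (\<lambda>i. X i \<omega>)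
                    (boot_response phat \<delta> (\<lambda>l. g l (training_data n1 X Y \<omega>)) (\<lambda>i. X i \<omega>) u)) = Tb z"
      unfolding Tb_def rz by (intro ext split_stat_cong) (auto simp: fz boot_response_def)
    have "{v\<in>space ?B. Tb z v < Ts z} \<in> sets ?B"
      using Tbm1[OF z] borel_measurable_const by (rule borel_measurable_less)
    then have "1 - \<alpha> \<le> measure ?B {v\<in>space ?B. Tb z v < Ts z}"
      using ev Tbbd alpha unfolding e1 e2
      by (intro quantile_lt[OF boot_law_prob, where K="\<Sum>l\<in>\<Lambda>. \<Sum>i\<in>{n1<..n}. \<bar>g l (restrict z {1..n1}) (fst (z i))\<bar>"])
         (auto intro: abs_le_D1)
    then show "\<omega> \<in> A" unfolding A_def R_def using z \<omega> z_def by auto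
  qed
  have mA: "measure M A \<le> \<alpha>"
  proof (cases "n = 0")
    case True
    then have "n \<le> n1" by simp
    then have "Ts z = 0" "Tb z v = 0" for z v
      unfolding Ts_def Tb_def using split_stat_empty[OF \<open>n \<le> n1\<close> Lfin Lne] by blast+
    then have "R = {}" unfolding R_def using alpha by auto
    then show ?thesis unfolding A_def using alpha by simp
  next
    case False
    then have one: "1 \<in> {1..n}" by simp
    define q where "q x = (if \<bar>phat x - p0 x\<bar> \<le> \<delta> then p0 x else phat x)" for x
    have qm: "q \<in> borel_measurable MX" unfolding q_def using phat_meas p0_meas by measurable
    have q01: "\<forall>x. q x \<in> {0..1}" unfolding q_def using phat_range p0_range by auto
    have qclose: "\<bar>phat x - q x\<bar> \<le> \<delta>" for x unfolding q_def using delta by auto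
    let ?phi = "\<lambda>(x,u). (x, if u \<le> q x then 1 else (0::real))"
    let ?\<nu>X = "distr M MX (X 1)"
    define \<nu> where "\<nu> = distr M ?MZ (\<lambda>\<omega>. (X 1 \<omega>, Y 1 \<omega>))"
    have cp1: "\<forall>a\<in>sets MX. measure M {\<omega>\<in>space M. X 1 \<omega> \<in> a \<and> Y 1 \<omega> = 1}
                = (\<integral>\<omega>. indicator a (X 1 \<omega>) * q (X 1 \<omega>) \<partial>M)"
    proof
      fix a assume a: "a \<in> sets MX"
      define N where "N = {\<omega> \<in> space M. \<bar>phat (X 1 \<omega>) - p0 (X 1 \<omega>)\<bar> > \<delta>}"
      have Nm: "N \<in> sets M" unfolding N_def using Xm[OF one] phat_meas p0_meas by measurable
      have "measure M N = 0" unfolding N_def using null one by auto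
      then have N0: "emeasure M N = 0" using Nm by (simp add: emeasure_eq_measure)
      have ae: "AE \<omega> in M. indicator a (X 1 \<omega>) * p0 (X 1 \<omega>) = indicator a (X 1 \<omega>) * q (X 1 \<omega>)"
        by (rule AE_I[OF _ N0 Nm]) (auto simp: N_def q_def)
      have "measure M {\<omega>\<in>space M. X 1 \<omega> \<in> a \<and> Y 1 \<omega> = 1} = (\<integral>\<omega>. indicator a (X 1 \<omega>) * p0 (X 1 \<omega>) \<partial>M)"
        using condprob one a by auto
      also have "\<dots> = (\<integral>\<omega>. indicator a (X 1 \<omega>) * q (X 1 \<omega>) \<partial>M)"
      proof (rule integral_cong_AE)
        note [measurable] = Xm[OF one] p0_meas qm a
        show "(\<lambda>\<omega>. indicator a (X 1 \<omega>) * p0 (X 1 \<omega>)) \<in> borel_measurable M" by measurable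
        show "(\<lambda>\<omega>. indicator a (X 1 \<omega>) * q (X 1 \<omega>)) \<in> borel_measurable M" by measurable
      qed (rule ae)
      finally show "measure M {\<omega>\<in>space M. X 1 \<omega> \<in> a \<and> Y 1 \<omega> = 1} = (\<integral>\<omega>. indicator a (X 1 \<omega>) * q (X 1 \<omega>) \<partial>M)" .
    qed
    have \<nu>eq: "\<nu> = distr (?\<nu>X \<Otimes>\<^sub>M U01) ?MZ ?phi"
      unfolding \<nu>_def using Xm[OF one] Ym[OF one] Y01 one qm q01 cp1 by (intro coupling_law[OF P]) auto
    have P\<nu>X: "prob_space ?\<nu>X" using Xm[OF one] by (intro prob_space_distr)
    have phim: "?phi \<in> measurable (?\<nu>X \<Otimes>\<^sub>M U01) ?MZ" using qm by measurable
    have P\<nu>: "prob_space \<nu>" unfolding \<nu>_def using rv[OF one] by (intro prob_space_distr)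
    have distrZ: "distr M ?PZ Zm = PiM {1..n} (\<lambda>_. \<nu>)"
    proof -
      have "distr M ?PZ Zm = PiM {1..n} (\<lambda>i. distr M ?MZ (\<lambda>\<omega>. (X i \<omega>, Y i \<omega>)))"
        unfolding Zm_def
      proof (rule indep_vars_iff_distr_eq_PiM'[THEN iffD1])
        show "{1..n} \<noteq> {}" using one by blast
        show "\<And>i. i \<in> {1..n} \<Longrightarrow> random_variable ?MZ (\<lambda>\<omega>. (X i \<omega>, Y i \<omega>))" by (rule rv)
        show "indep_vars (\<lambda>_. ?MZ) (\<lambda>i \<omega>. (X i \<omega>, Y i \<omega>)) {1..n}" by (rule indep)
      qed
      also have "\<dots> = PiM {1..n} (\<lambda>_. \<nu>)"
      proof (rule PiM_cong[OF refl])
        fix i assume "i \<in> {1..n}"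
        then show "distr M ?MZ (\<lambda>\<omega>. (X i \<omega>, Y i \<omega>)) = \<nu>" unfolding \<nu>_def using ident by blast
      qed
      finally show ?thesis .
    qed
    define tr where "tr = {1..n1}"
    define te where "te = {n1<..n}"
    have trte: "tr \<union> te = {1..n}" "tr \<inter> te = {}" "finite tr" "finite te"
      unfolding tr_def te_def using n1n by auto
    interpret PP: product_prob_space "\<lambda>_. \<nu>" "{1..n}" using P\<nu> by (intro product_prob_spaceI) auto
    have s\<nu>: "sets \<nu> = sets ?MZ" unfolding \<nu>_def by simp
    have sPZ: "sets (PiM I (\<lambda>_. \<nu>)) = sets (PiM I (\<lambda>_. ?MZ))" for I
      using s\<nu> by (intro sets_PiM_cong) auto
    define Q where "Q = merge tr te -` R \<inter> space (PiM tr (\<lambda>_. \<nu>) \<Otimes>\<^sub>M PiM te (\<lambda>_. \<nu>))"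
    have Rm': "R \<in> sets (PiM (tr \<union> te) (\<lambda>_. \<nu>))" unfolding trte(1) sPZ using Rm .
    have Qm: "Q \<in> sets (PiM tr (\<lambda>_. \<nu>) \<Otimes>\<^sub>M PiM te (\<lambda>_. \<nu>))"
      unfolding Q_def using measurable_sets[OF measurable_merge Rm'] .
    have Pte: "prob_space (PiM te (\<lambda>_. \<nu>))" using P\<nu> by (intro prob_space_PiM)
    have Ptr: "prob_space (PiM tr (\<lambda>_. \<nu>))" using P\<nu> by (intro prob_space_PiM)
    have inner: "emeasure (PiM te (\<lambda>_. \<nu>)) (Pair d -` Q) \<le> ennreal \<alpha>" if d: "d \<in> space (PiM tr (\<lambda>_. \<nu>))" for d
    proof -
      let ?Psi = "\<lambda>(f,g). \<lambda>i\<in>te. ?phi (f i, g i)"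
      have bl: "?B = PiM te (\<lambda>_. U01)" unfolding boot_law_def te_def ..
      have tl: "PiM te (\<lambda>_. \<nu>) = distr (PiM te (\<lambda>_. ?\<nu>X) \<Otimes>\<^sub>M ?B) (PiM te (\<lambda>_. ?MZ)) ?Psi"
        unfolding \<nu>eq bl by (rule test_law[OF trte(4) P\<nu>X U01_prob phim])
      have Psim: "?Psi \<in> measurable (PiM te (\<lambda>_. ?\<nu>X) \<Otimes>\<^sub>M ?B) (PiM te (\<lambda>_. ?MZ))"
        unfolding bl using phim by measurable
      have Sm: "Pair d -` Q \<in> sets (PiM te (\<lambda>_. ?MZ))"
        using sets_Pair1[OF Qm, of d] unfolding sPZ .
      have PteX: "prob_space (PiM te (\<lambda>_. ?\<nu>X))" using P\<nu>X by (intro prob_space_PiM)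
      have innermost: "emeasure ?B (Pair x -` (?Psi -` (Pair d -` Q) \<inter> space (PiM te (\<lambda>_. ?\<nu>X) \<Otimes>\<^sub>M ?B))) \<le> ennreal \<alpha>"
        if x: "x \<in> space (PiM te (\<lambda>_. ?\<nu>X))" for x
      proof -
        define W where "W w = split_stat phat \<delta> \<Lambda> (\<lambda>l. g l d) n1 n x (boot_response phat \<delta> (\<lambda>l. g l d) x w)" for w
        have xi: "x i \<in> space MX" if "i \<in> te" for i
          using x that by (auto simp: space_PiM PiE_iff)
        have Wm: "W \<in> borel_measurable ?B"
          unfolding W_def
        proof (rule split_stat_meas[OF Lfin phat_meas])
          fix i assume i: "i \<in> {n1<..n}"
          then have ite: "i \<in> te" unfolding te_def .
          show "(\<lambda>w. x i) \<in> measurable ?B MX" using xi[OF ite] by (rule measurable_const)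
          fix l assume l: "l \<in> \<Lambda>"
          show "(\<lambda>w. g l d (x i)) \<in> borel_measurable ?B" by simp
          have c0: "(\<lambda>w. w i) \<in> measurable ?B U01"
            unfolding boot_law_def using i by (rule measurable_component_singleton)
          have "measurable ?B U01 = borel_measurable ?B" by (rule measurable_cong_sets) simp_all
          then have c: "(\<lambda>w. w i) \<in> borel_measurable ?B" using c0 by metis
          have pr: "{w \<in> space ?B. w i \<le> phat (x i) + \<delta> * sgn (g l d (x i))} \<in> sets ?B"
            using c borel_measurable_const by (rule borel_measurable_le)
          show "(\<lambda>w. boot_response phat \<delta> (\<lambda>l. g l d) x w l i) \<in> borel_measurable ?B"
            unfolding boot_response_def using pr by (intro measurable_If measurable_const) (auto simp: pred_def)
        qed
        have Wbd: "\<bar>W w\<bar> \<le> (\<Sum>l\<in>\<Lambda>. \<Sum>i\<in>{n1<..n}. \<bar>g l d (x i)\<bar>)" for w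
          unfolding W_def by (rule split_stat_bound[OF Lfin Lne]) (auto simp: boot_response_def)
        define G where "G t = measure ?B {w\<in>space ?B. W w < t}" for t
        have Gm: "{w\<in>space ?B. W w < t} \<in> sets ?B" for t
          using Wm borel_measurable_const by (rule borel_measurable_less)
        have Gmono: "mono G" unfolding G_def mono_def
          using Gm by (auto intro!: B.finite_measure_mono)
        have GWm: "(\<lambda>v. G (W v)) \<in> borel_measurable ?B"
          using measurable_compose[OF Wm borel_measurable_mono[OF Gmono]] by simp
        define Gset where "Gset = {v\<in>space ?B. 1 - \<alpha> \<le> G (W v)}"
        have Gsetm: "Gset \<in> sets ?B" unfolding Gset_def using borel_measurable_const GWm by (rule borel_measurable_le)
        have sub2: "Pair x -` (?Psi -` (Pair d -` Q) \<inter> space (PiM te (\<lambda>_. ?\<nu>X) \<Otimes>\<^sub>M ?B)) \<subseteq> Gset"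
        proof
          fix v assume v: "v \<in> Pair x -` (?Psi -` (Pair d -` Q) \<inter> space (PiM te (\<lambda>_. ?\<nu>X) \<Otimes>\<^sub>M ?B))"
          then have vB: "v \<in> space ?B" using x by (auto simp: space_pair_measure)
          define z where "z = merge tr te (d, ?Psi (x, v))"
          have zR: "z \<in> R" using v unfolding z_def Q_def by auto
          have dext: "d \<in> extensional tr" using d by (auto simp: space_PiM PiE_iff)
          have rz: "restrict z {1..n1} = d"
            unfolding tr_def[symmetric] z_def using trte(2) dext
            by (intro ext) (auto simp: restrict_def merge_def extensional_def)
          have zi: "z i = (x i, if v i \<le> q (x i) then 1 else 0)" if "i \<in> {n1<..n}" for i
            using that trte(2) unfolding z_def te_def by (auto simp: merge_def)
          have TbW: "Tb z w = W w" for w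
            unfolding Tb_def W_def rz by (rule split_stat_cong) (auto simp: zi boot_response_def)
          have Tsz: "Ts z = split_stat phat \<delta> \<Lambda> (\<lambda>l. g l d) n1 n x (\<lambda>l i. if v i \<le> q (x i) then 1 else 0)"
            unfolding Ts_def rz by (rule split_stat_cong) (auto simp: zi)
          have "Ts z \<le> W v" unfolding Tsz W_def
            using Lfin Lne qclose by (intro coupling) auto
          then have "measure ?B {w\<in>space ?B. Tb z w < Ts z} \<le> G (W v)"
            unfolding TbW G_def using Gm by (intro B.finite_measure_mono) auto
          moreover have "1 - \<alpha> \<le> measure ?B {w\<in>space ?B. Tb z w < Ts z}" using zR unfolding R_def by auto
          ultimately show "v \<in> Gset" unfolding Gset_def using vB by auto
        qed
        have "measure ?B Gset \<le> \<alpha>"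
          unfolding Gset_def G_def using tail_bound[OF boot_law_prob Wm _ alpha] Wbd by blast
        then have "emeasure ?B Gset \<le> ennreal \<alpha>" by (simp add: B.emeasure_eq_measure ennreal_leI)
        then show ?thesis using emeasure_mono[OF sub2 Gsetm] by (rule order.trans[rotated])
      qed
      have "emeasure (PiM te (\<lambda>_. \<nu>)) (Pair d -` Q)
          = emeasure (PiM te (\<lambda>_. ?\<nu>X) \<Otimes>\<^sub>M ?B) (?Psi -` (Pair d -` Q) \<inter> space (PiM te (\<lambda>_. ?\<nu>X) \<Otimes>\<^sub>M ?B))"
        unfolding tl using Psim Sm by (rule emeasure_distr)
      also have "\<dots> = (\<integral>\<^sup>+x. emeasure ?B (Pair x -` (?Psi -` (Pair d -` Q) \<inter> space (PiM te (\<lambda>_. ?\<nu>X) \<Otimes>\<^sub>M ?B))) \<partial>PiM te (\<lambda>_. ?\<nu>X))"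
        using measurable_sets[OF Psim Sm] by (rule B.emeasure_pair_measure_alt)
      also have "\<dots> \<le> (\<integral>\<^sup>+x. ennreal \<alpha> \<partial>PiM te (\<lambda>_. ?\<nu>X))"
        using innermost by (intro nn_integral_mono) auto
      also have "\<dots> = ennreal \<alpha>" using PteX by (simp add: prob_space.emeasure_space_1)
      finally show ?thesis .
    qed
    have "emeasure (PiM {1..n} (\<lambda>_. \<nu>)) R = emeasure (distr (PiM tr (\<lambda>_. \<nu>) \<Otimes>\<^sub>M PiM te (\<lambda>_. \<nu>)) (PiM (tr \<union> te) (\<lambda>_. \<nu>)) (merge tr te)) R"
      using PP.distr_merge[OF trte(2) trte(3) trte(4)] trte(1) by simp
    also have "\<dots> = emeasure (PiM tr (\<lambda>_. \<nu>) \<Otimes>\<^sub>M PiM te (\<lambda>_. \<nu>)) Q"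
      unfolding Q_def using Rm' by (intro emeasure_distr measurable_merge)
    also have "\<dots> = (\<integral>\<^sup>+d. emeasure (PiM te (\<lambda>_. \<nu>)) (Pair d -` Q) \<partial>PiM tr (\<lambda>_. \<nu>))"
      using Qm by (intro sigma_finite_measure.emeasure_pair_measure_alt prob_space_imp_sigma_finite Pte)
    also have "\<dots> \<le> (\<integral>\<^sup>+d. ennreal \<alpha> \<partial>PiM tr (\<lambda>_. \<nu>))"
      using inner by (intro nn_integral_mono) auto
    also have "\<dots> = ennreal \<alpha>" using Ptr by (simp add: prob_space.emeasure_space_1)
    finally have "emeasure (PiM {1..n} (\<lambda>_. \<nu>)) R \<le> ennreal \<alpha>" .
    moreover have "measure M A = measure (PiM {1..n} (\<lambda>_. \<nu>)) R"
      unfolding A_def using measure_distr[OF Zmm Rm] distrZ by simp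
    moreover have "prob_space (PiM {1..n} (\<lambda>_. \<nu>))" using P\<nu> by (intro prob_space_PiM)
    ultimately show ?thesis using alpha
      by (metis ennreal_le_iff less_imp_le prob_space.finite_measure finite_measure.emeasure_eq_measure)
  qed
  show ?thesis using Am sub mA by blast
qed


end
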